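(* (i) For every integer $t\ge1$, $\mathrm{rrsat}(n,K_{t+2})=\Omega(n^{3/2})$. (ii) For every integer $t\ge 1$ there is a constant $C_t$ depending only on $t$ such that $\liminf_{n\to\infty}\frac{\mathrm{rrsat}(n,K_{t+2})}{n^{3/2}}\le C_t$.
   Context: All graphs are finite and simple. A graph is regular if all vertices have the same degree. For a graph $F$, $\mathrm{rrsat}(n,F)$ denotes the smallest number of edges of a regular $n$-vertex graph $G$ that contains no copy of $F$ and such that every regular $n$-vertex graph properly containing $G$ (i.e. obtained from $G$ by adding at least one edge on the same vertex set) contains a copy of $F$. $K_r$ denotes the complete graph on $r$ vertices. *)

theory Defs
  imports Complex_Main "HOL-Library.Landau_Symbols" "HOL-Library.Extended_Real"
begin

definition simple_graph :: "nat \<Rightarrow> nat set set \<Rightarrow> bool" where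
  "simple_graph n E \<longleftrightarrow> (\<forall>e\<in>E. e \<subseteq> {0..<n} \<and> card e = 2)"

definition degree :: "nat set set \<Rightarrow> nat \<Rightarrow> nat" where
  "degree E v = card {e\<in>E. v \<in> e}"

definition regular_graph :: "nat \<Rightarrow> nat set set \<Rightarrow> bool" where
  "regular_graph n E \<longleftrightarrow> simple_graph n E \<and> (\<exists>d. \<forall>v<n. degree E v = d)"

definition contains_clique :: "nat \<Rightarrow> nat set set \<Rightarrow> nat \<Rightarrow> bool" where
  "contains_clique n E r \<longleftrightarrow>
     (\<exists>S. S \<subseteq> {0..<n} \<and> card S = r \<and> (\<forall>x\<in>S. \<forall>y\<in>S. x \<noteq> y \<longrightarrow> {x, y} \<in> E))"

definition rrsat_graph :: "nat \<Rightarrow> nat \<Rightarrow> nat set set \<Rightarrow> bool" where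
  "rrsat_graph n r E \<longleftrightarrow> regular_graph n E \<and> \<not> contains_clique n E r \<and>
     (\<forall>E'. regular_graph n E' \<and> E \<subset> E' \<longrightarrow> contains_clique n E' r)"

definition rrsat :: "nat \<Rightarrow> nat \<Rightarrow> nat" where
  "rrsat n r = Min {card E | E. rrsat_graph n r E}"

end

theory Submission
  imports Defs
begin

definition nbr :: "nat set set \<Rightarrow> nat \<Rightarrow> nat set" where
  "nbr E x = {y. {x,y} \<in> E}"

definition N2 :: "nat \<Rightarrow> nat set set \<Rightarrow> nat \<Rightarrow> nat set" where
  "N2 n E x = {y. y < n \<and> (y = x \<or> {x,y} \<in> E \<or> (\<exists>w. {x,w} \<in> E \<and> {w,y} \<in> E))}"

lemma sg_edge:
  assumes "simple_graph n E" "e \<in> E"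
  shows "\<exists>a b. a \<noteq> b \<and> a < n \<and> b < n \<and> e = {a,b}"
proof -
  have e: "e \<subseteq> {0..<n}" "card e = 2" using assms unfolding simple_graph_def by auto
  then obtain a b where ab: "e = {a,b}" "a \<noteq> b" unfolding card_2_iff by blast
  then show ?thesis using e(1) by auto
qed

lemma sg_pair:
  assumes "simple_graph n E" "{a,b} \<in> E"
  shows "a \<noteq> b \<and> a < n \<and> b < n"
proof -
  have e: "{a,b} \<subseteq> {0..<n}" "card {a,b} = 2" using assms unfolding simple_graph_def by auto
  have "a \<noteq> b" using e(2) by (cases "a = b") auto
  then show ?thesis using e(1) by auto
qed

lemma sg_finite: "simple_graph n E \<Longrightarrow> finite E"
proof -
  assume "simple_graph n E"
  then have "E \<subseteq> Pow {0..<n}" unfolding simple_graph_def by blast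
  then show "finite E" by (rule finite_subset) simp
qed

lemma nbr_sub: "simple_graph n E \<Longrightarrow> nbr E x \<subseteq> {0..<n}"
proof
  fix y assume "simple_graph n E" "y \<in> nbr E x"
  then show "y \<in> {0..<n}" using sg_pair[of n E x y] unfolding nbr_def by auto
qed

lemma nbr_finite: "simple_graph n E \<Longrightarrow> finite (nbr E x)"
  by (rule finite_subset[OF nbr_sub]) auto

lemma nbr_card: "simple_graph n E \<Longrightarrow> card (nbr E x) = degree E x"
proof -
  assume sg: "simple_graph n E"
  have "bij_betw (\<lambda>y. {x,y}) (nbr E x) {e\<in>E. x\<in>e}"
  proof (rule bij_betwI')
    fix y z assume "y \<in> nbr E x" "z \<in> nbr E x"
    then show "({x, y} = {x, z}) = (y = z)" using sg_pair[OF sg] unfolding nbr_def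
      by (metis doubleton_eq_iff)
  next
    fix y assume "y \<in> nbr E x" then show "{x, y} \<in> {e \<in> E. x \<in> e}" unfolding nbr_def by auto
  next
    fix e assume "e \<in> {e \<in> E. x \<in> e}"
    then obtain a b where "e = {a,b}" "e \<in> E" "x \<in> e" using sg_edge[OF sg] by blast
    then show "\<exists>y\<in>nbr E x. e = {x, y}" unfolding nbr_def by (auto simp: insert_commute)
  qed
  then show ?thesis unfolding degree_def by (simp add: bij_betw_same_card)
qed

lemma N2_sub: "N2 n E x \<subseteq> insert x (nbr E x \<union> \<Union> (nbr E ` nbr E x))"
  unfolding N2_def nbr_def by auto

lemma N2_card:
  assumes sg: "simple_graph n E" and reg: "\<forall>v<n. degree E v = d" and x: "x < n"
  shows "card (N2 n E x) \<le> 1 + d + d * d"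
proof -
  have fin: "finite (nbr E y)" for y using nbr_finite[OF sg] .
  have c1: "card (nbr E x) = d" using nbr_card[OF sg] reg x by simp
  have c2: "card (nbr E y) = d" if "y \<in> nbr E x" for y
    using that nbr_sub[OF sg, of x] reg by (force simp: nbr_card[OF sg])
  have "card (\<Union> (nbr E ` nbr E x)) \<le> (\<Sum>y\<in>nbr E x. card (nbr E y))"
    by (rule card_UN_le) (rule fin)
  also have "\<dots> = d * d" using c1 c2 by simp
  finally have u: "card (\<Union> (nbr E ` nbr E x)) \<le> d * d" .
  have "card (N2 n E x) \<le> card (insert x (nbr E x \<union> \<Union> (nbr E ` nbr E x)))"
    using fin N2_sub by (intro card_mono) auto
  also have "\<dots> \<le> 1 + card (nbr E x \<union> \<Union> (nbr E ` nbr E x))"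
  proof -
    have "finite (nbr E x \<union> \<Union> (nbr E ` nbr E x))" using fin by blast
    then show ?thesis by (simp add: card_insert_if)
  qed
  also have "\<dots> \<le> 1 + (card (nbr E x) + card (\<Union> (nbr E ` nbr E x)))"
    using card_Un_le by simp
  finally show ?thesis using c1 u by simp
qed

lemma N2_sym: "x < n \<Longrightarrow> y < n \<Longrightarrow> y \<in> N2 n E x \<longleftrightarrow> x \<in> N2 n E y"
proof -
  assume "x < n" "y < n"
  have 1: "{x,y} = {y,x}" by blast
  have 2: "(\<exists>w. {x,w}\<in>E \<and> {w,y}\<in>E) \<longleftrightarrow> (\<exists>w. {y,w}\<in>E \<and> {w,x}\<in>E)"
    by (metis insert_commute)
  show ?thesis unfolding N2_def using 1 2 \<open>x < n\<close> \<open>y < n\<close> by auto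
qed

lemma N2_self: "x < n \<Longrightarrow> x \<in> N2 n E x"
  unfolding N2_def by auto

lemma N2_finite: "finite (N2 n E x)"
  unfolding N2_def by (rule finite_subset[of _ "{..<n}"]) auto

lemma handshake:
  assumes sg: "simple_graph n E"
  shows "(\<Sum>v<n. degree E v) = 2 * card E"
proof -
  have fE: "finite E" using sg_finite[OF sg] .
  have cv: "card {e\<in>E. v \<in> e} = (\<Sum>e\<in>E. if v \<in> e then 1 else 0)" for v
    using fE by (simp add: sum.inter_filter[symmetric])
  have "(\<Sum>v<n. degree E v) = (\<Sum>v<n. \<Sum>e\<in>E. if v \<in> e then 1 else 0)"
    unfolding degree_def using cv by simp
  also have "\<dots> = (\<Sum>e\<in>E. \<Sum>v<n. if v \<in> e then 1 else 0)"
    by (rule sum.swap)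
  also have "\<dots> = (\<Sum>e\<in>E. 2)"
  proof (rule sum.cong)
    fix e assume "e \<in> E"
    then have "e \<subseteq> {..<n}" "card e = 2" using sg unfolding simple_graph_def by (auto simp: atLeast0LessThan)
    then show "(\<Sum>v<n. if v \<in> e then 1 else 0) = (2::nat)"
      by (simp add: sum.If_cases inf.absorb2)
  qed simp
  finally show ?thesis by simp
qed

lemma handshake_reg:
  assumes sg: "simple_graph n E" and reg: "\<forall>v<n. degree E v = d"
  shows "2 * card E = n * d"
  using handshake[OF sg] reg by simp

definition good :: "nat \<Rightarrow> nat set set \<Rightarrow> nat set \<Rightarrow> (nat \<Rightarrow> nat) \<Rightarrow> bool" where
  "good n E W s \<longleftrightarrow> W \<subseteq> {..<n} \<and> s ` W \<subseteq> W \<and> inj_on s W \<and>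
     (\<forall>x\<in>W. s x \<noteq> x \<and> s (s x) \<noteq> x \<and> s (s (s x)) \<noteq> x \<and> s x \<notin> N2 n E x \<and> {x, s (s x)} \<notin> E)"

lemma goodI:
  assumes "W \<subseteq> {..<n}" "s ` W \<subseteq> W" "inj_on s W"
    "\<And>x. x \<in> W \<Longrightarrow> s x \<noteq> x \<and> s (s x) \<noteq> x \<and> s (s (s x)) \<noteq> x \<and> s x \<notin> N2 n E x \<and> {x, s (s x)} \<notin> E"
  shows "good n E W s"
  using assms unfolding good_def by blast

lemma N2_edge: "y < n \<Longrightarrow> {x,y} \<in> E \<Longrightarrow> y \<in> N2 n E x"
  unfolding N2_def by auto

lemma insert_step:
  assumes g: "good n E W s" and x: "x < n" "x \<notin> W" and a: "a \<in> W"
    and c1: "x \<notin> N2 n E a" and c2: "s a \<notin> N2 n E x"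
    and c3: "\<forall>b\<in>W. s b = a \<longrightarrow> {b,x} \<notin> E" and c4: "{x, s (s a)} \<notin> E"
  shows "good n E (insert x W) (s(a:=x, x:=s a))"
proof -
  let ?s = "s(a:=x, x:=s a)"
  have W: "W \<subseteq> {..<n}" "s ` W \<subseteq> W" "inj_on s W"
    and P: "\<And>y. y \<in> W \<Longrightarrow> s y \<noteq> y \<and> s (s y) \<noteq> y \<and> s (s (s y)) \<noteq> y \<and> s y \<notin> N2 n E y \<and> {y, s (s y)} \<notin> E"
    using g unfolding good_def by auto
  have sW: "y \<in> W \<Longrightarrow> s y \<in> W" for y using W by auto
  have xa: "x \<noteq> a" using x a by auto
  have sx: "y \<in> W \<Longrightarrow> s y \<noteq> x" for y using sW x by auto
  have injE: "y \<in> W \<Longrightarrow> z \<in> W \<Longrightarrow> s y = s z \<Longrightarrow> y = z" for y z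
    using W(3) by (auto dest: inj_onD)
  have an: "a < n" "s a < n" using W a sW by auto
  have aE: "{a, s a} \<notin> E" using P[OF a] N2_edge an by blast
  have img: "?s ` insert x W \<subseteq> insert x W" using sW a by auto
  have v: "?s y = (if y = x then s a else if y = a then x else s y)" for y using xa by auto
  have inj: "inj_on ?s (insert x W)"
  proof (rule inj_onI)
    fix y z assume y: "y \<in> insert x W" and z: "z \<in> insert x W" and e: "?s y = ?s z"
    have "y = x \<or> y = a \<or> (y \<in> W \<and> y \<noteq> a \<and> y \<noteq> x)" using y by auto
    moreover have "z = x \<or> z = a \<or> (z \<in> W \<and> z \<noteq> a \<and> z \<noteq> x)" using z by auto
    moreover have "s y \<noteq> s a" if "y \<in> W" "y \<noteq> a" for y using injE[OF that(1) a] that(2) by blast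
    ultimately show "y = z" using e v[of y] v[of z] sx a xa injE by (smt (verit))
  qed
  have props: "?s y \<noteq> y \<and> ?s (?s y) \<noteq> y \<and> ?s (?s (?s y)) \<noteq> y \<and> ?s y \<notin> N2 n E y \<and> {y, ?s (?s y)} \<notin> E"
    if y: "y \<in> insert x W" for y
  proof (cases "y = a")
    case True
    have "s a \<noteq> a" "s (s a) \<noteq> a" "s a \<noteq> x" "s (s a) \<noteq> x" using P[OF a] sx sW a by auto
    then show ?thesis using True xa c1 aE by auto
  next
    case ya: False
    show ?thesis
    proof (cases "y = x")
      case True
      have "s a \<noteq> a" "s (s a) \<noteq> a" "s a \<noteq> x" "s (s a) \<noteq> x" "s (s (s a)) \<noteq> x"
        using P[OF a] sx sW a by auto
      then show ?thesis using True xa c2 c4 by auto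
    next
      case yx: False
      then have yW: "y \<in> W" using y by auto
      have syx: "s y \<noteq> x" "s (s y) \<noteq> x" "s (s (s y)) \<noteq> x" using sx sW yW by auto
      have py: "s y \<noteq> y" "s (s y) \<noteq> y" "s (s (s y)) \<noteq> y" "s y \<notin> N2 n E y" "{y, s (s y)} \<notin> E"
        using P[OF yW] by auto
      show ?thesis
      proof (cases "s y = a")
        case True
        have "s a \<noteq> y" using True P[OF yW] by auto
        then show ?thesis using True ya yx xa c3 yW syx py by auto
      next
        case sya: False
        show ?thesis
        proof (cases "s (s y) = a")
          case True
          then show ?thesis using ya yx xa sya syx py by auto
        next
          case False
          then show ?thesis using ya yx xa sya syx py by auto
        qed
      qed
    qed
  qed
  show ?thesis by (rule goodI[OF _ img inj props]) (use W(1) x in auto)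
qed

lemma cycle_step:
  assumes g: "good n E W s" and c: "c1 < n" "c2 < n" "c3 < n" "c4 < n"
    and nW: "c1 \<notin> W" "c2 \<notin> W" "c3 \<notin> W" "c4 \<notin> W"
    and d: "c1 \<noteq> c2" "c1 \<noteq> c3" "c1 \<noteq> c4" "c2 \<noteq> c3" "c2 \<noteq> c4" "c3 \<noteq> c4"
    and f: "c2 \<notin> N2 n E c1" "c3 \<notin> N2 n E c2" "c4 \<notin> N2 n E c3" "c1 \<notin> N2 n E c4"
    and e: "{c1,c3} \<notin> E" "{c2,c4} \<notin> E" "{c3,c1} \<notin> E" "{c4,c2} \<notin> E"
  shows "good n E (W \<union> {c1,c2,c3,c4}) (s(c1:=c2, c2:=c3, c3:=c4, c4:=c1))"
proof -
  let ?s = "s(c1:=c2, c2:=c3, c3:=c4, c4:=c1)"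
  have W: "W \<subseteq> {..<n}" "s ` W \<subseteq> W" "inj_on s W"
    and P: "\<And>y. y \<in> W \<Longrightarrow> s y \<noteq> y \<and> s (s y) \<noteq> y \<and> s (s (s y)) \<noteq> y \<and> s y \<notin> N2 n E y \<and> {y, s (s y)} \<notin> E"
    using g unfolding good_def by auto
  have sW: "y \<in> W \<Longrightarrow> s y \<in> W" for y using W by auto
  have eqW: "y \<in> W \<Longrightarrow> ?s y = s y" for y using nW by auto
  have img: "?s ` (W \<union> {c1,c2,c3,c4}) \<subseteq> W \<union> {c1,c2,c3,c4}" using sW eqW by auto
  have inj: "inj_on ?s (W \<union> {c1,c2,c3,c4})"
  proof (rule inj_onI)
    fix y z assume yz: "y \<in> W \<union> {c1,c2,c3,c4}" "z \<in> W \<union> {c1,c2,c3,c4}" "?s y = ?s z"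
    show "y = z"
    proof (cases "y \<in> W \<and> z \<in> W")
      case True then show ?thesis using yz eqW W(3) by (auto dest: inj_onD)
    next
      case False
      then show ?thesis using yz sW nW d eqW by (auto split: if_splits)
    qed
  qed
  have props: "?s y \<noteq> y \<and> ?s (?s y) \<noteq> y \<and> ?s (?s (?s y)) \<noteq> y \<and> ?s y \<notin> N2 n E y \<and> {y, ?s (?s y)} \<notin> E"
    if y: "y \<in> W \<union> {c1,c2,c3,c4}" for y
  proof (cases "y \<in> W")
    case True
    then show ?thesis using eqW sW P by simp
  next
    case False
    then show ?thesis using y d f e by auto
  qed
  show ?thesis unfolding good_def using W(1) c img inj props by auto
qed

lemma pick: "finite B \<Longrightarrow> card B < n \<Longrightarrow> \<exists>x<n. x \<notin> B"
proof (rule ccontr)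
  assume "finite B" "card B < n" "\<not> (\<exists>x<n. x \<notin> B)"
  then have "{..<n} \<subseteq> B" by auto
  then have "card {..<n} \<le> card B" using \<open>finite B\<close> by (rule card_mono[rotated])
  then show False using \<open>card B < n\<close> by simp
qed

lemma good_finite: "good n E W s \<Longrightarrow> finite W"
  unfolding good_def by (meson finite_lessThan finite_subset)

lemma phase1:
  assumes sg: "simple_graph n E" and reg: "\<forall>v<n. degree E v = d"
  shows "4*q + 3*(1+d+d*d) < n \<Longrightarrow> \<exists>W s. good n E W s \<and> card W = 4*q"
proof (induction q)
  case 0
  have "good n E {} id" unfolding good_def by auto
  then show ?case by auto
next
  case (Suc q)
  let ?D = "1+d+d*d"
  from Suc.prems have "4*q + 3*?D < n" by simp
  then obtain W s where g: "good n E W s" and cW: "card W = 4*q" using Suc.IH by blast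
  have fW: "finite W" using good_finite[OF g] .
  have Wn: "W \<subseteq> {..<n}" using g unfolding good_def by auto
  have cN: "x < n \<Longrightarrow> card (N2 n E x) \<le> ?D" for x using N2_card[OF sg reg] by simp
  have fN: "finite (N2 n E x)" for x by (rule N2_finite)
  obtain c1 where c1: "c1 < n" "c1 \<notin> W" using pick[OF fW, of n] cW Suc.prems by auto
  have "card (W \<union> N2 n E c1) \<le> 4*q + ?D" using card_Un_le[of W "N2 n E c1"] cW cN[OF c1(1)] by simp
  then obtain c2 where c2: "c2 < n" "c2 \<notin> W \<union> N2 n E c1"
    using pick[of "W \<union> N2 n E c1" n] fW fN Suc.prems by auto
  have "card (W \<union> N2 n E c1 \<union> N2 n E c2) \<le> 4*q + 2*?D"
    using card_Un_le[of "W \<union> N2 n E c1" "N2 n E c2"] card_Un_le[of W "N2 n E c1"] cW cN[OF c1(1)] cN[OF c2(1)] by simp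
  then obtain c3 where c3: "c3 < n" "c3 \<notin> W \<union> N2 n E c1 \<union> N2 n E c2"
    using pick[of "W \<union> N2 n E c1 \<union> N2 n E c2" n] fW fN Suc.prems by auto
  have "card (W \<union> N2 n E c1 \<union> N2 n E c2 \<union> N2 n E c3) \<le> 4*q + 3*?D"
    using card_Un_le[of "W \<union> N2 n E c1 \<union> N2 n E c2" "N2 n E c3"]
      card_Un_le[of "W \<union> N2 n E c1" "N2 n E c2"] card_Un_le[of W "N2 n E c1"]
      cW cN[OF c1(1)] cN[OF c2(1)] cN[OF c3(1)] by simp
  then obtain c4 where c4: "c4 < n" "c4 \<notin> W \<union> N2 n E c1 \<union> N2 n E c2 \<union> N2 n E c3"
    using pick[of "W \<union> N2 n E c1 \<union> N2 n E c2 \<union> N2 n E c3" n] fW fN Suc.prems by auto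
  have self: "x < n \<Longrightarrow> x \<in> N2 n E x" for x by (rule N2_self)
  have d: "c1 \<noteq> c2" "c1 \<noteq> c3" "c1 \<noteq> c4" "c2 \<noteq> c3" "c2 \<noteq> c4" "c3 \<noteq> c4"
    using c1 c2 c3 c4 self by auto
  have f14: "c1 \<notin> N2 n E c4" using N2_sym[OF c1(1) c4(1)] c4 by auto
  have e1: "{c1,c3} \<notin> E" using N2_edge[of c3 n c1 E] c3 by blast
  have e2: "{c2,c4} \<notin> E" using N2_edge[of c4 n c2 E] c4 by blast
  have e3: "{c3,c1} \<notin> E" using e1 by (simp add: insert_commute)
  have e4: "{c4,c2} \<notin> E" using e2 by (simp add: insert_commute)
  have nW: "c1 \<notin> W" "c2 \<notin> W" "c3 \<notin> W" "c4 \<notin> W" using c1 c2 c3 c4 by auto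
  have f: "c2 \<notin> N2 n E c1" "c3 \<notin> N2 n E c2" "c4 \<notin> N2 n E c3" using c2 c3 c4 by auto
  have g': "good n E (W \<union> {c1,c2,c3,c4}) (s(c1:=c2, c2:=c3, c3:=c4, c4:=c1))"
    by (rule cycle_step[OF g c1(1) c2(1) c3(1) c4(1) nW d f f14 e1 e2 e3 e4])
  have "card (W \<union> {c1,c2,c3,c4}) = 4 * Suc q"
    using cW fW c1 c2 c3 c4 d by (simp add: card_insert_if)
  then show ?case using g' by blast
qed

lemma phase2:
  assumes sg: "simple_graph n E" and reg: "\<forall>v<n. degree E v = d"
    and g0: "good n E W0 s0" and c0: "card W0 = k0" and big: "2*(1+d+d*d) + 2*d < k0"
    and k: "k0 \<le> k" "k \<le> n"
  shows "\<exists>W s. good n E W s \<and> card W = k"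
  using k
proof (induction k rule: dec_induct)
  case base
  then show ?case using g0 c0 by blast
next
  case (step m)
  let ?D = "1+d+d*d"
  obtain W s where g: "good n E W s" and cW: "card W = m" using step.IH step.prems by auto
  have fW: "finite W" using good_finite[OF g] .
  have Wn: "W \<subseteq> {..<n}" and sW: "s ` W \<subseteq> W" and inj: "inj_on s W"
    using g unfolding good_def by auto
  obtain x where x: "x < n" "x \<notin> W" using pick[OF fW, of n] cW step.hyps k(2) by auto
  have fN: "finite (N2 n E x)" by (rule N2_finite)
  have cN: "card (N2 n E x) \<le> ?D" using N2_card[OF sg reg x(1)] by simp
  have cnb: "card (nbr E x) = d" using nbr_card[OF sg] reg x by simp
  have fnb: "finite (nbr E x)" using nbr_finite[OF sg] .
  define B1 where "B1 = {a\<in>W. x \<in> N2 n E a}"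
  define B2 where "B2 = {a\<in>W. s a \<in> N2 n E x}"
  define B3 where "B3 = {a\<in>W. \<exists>b\<in>W. s b = a \<and> {b,x} \<in> E}"
  define B4 where "B4 = {a\<in>W. s (s a) \<in> nbr E x}"
  have "B1 \<subseteq> N2 n E x" unfolding B1_def using N2_sym x Wn by auto
  then have b1: "card B1 \<le> ?D" using card_mono[OF fN] cN by (meson le_trans)
  have "card B2 \<le> card (N2 n E x)"
    by (rule card_inj_on_le[of s]) (use inj fN in \<open>auto simp: B2_def intro: inj_on_subset\<close>)
  then have b2: "card B2 \<le> ?D" using cN by simp
  have "B3 \<subseteq> s ` (nbr E x)" unfolding B3_def nbr_def by (auto simp: insert_commute)
  then have "card B3 \<le> card (s ` nbr E x)" using fnb by (simp add: card_mono)
  also have "\<dots> \<le> d" using card_image_le[OF fnb, of s] cnb by simp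
  finally have b3: "card B3 \<le> d" .
  have inj2: "inj_on (\<lambda>a. s (s a)) W"
  proof (rule inj_onI)
    fix y z assume "y \<in> W" "z \<in> W" "s (s y) = s (s z)"
    then have "s y = s z" using inj sW by (auto dest: inj_onD)
    then show "y = z" using inj \<open>y \<in> W\<close> \<open>z \<in> W\<close> by (auto dest: inj_onD)
  qed
  have "card B4 \<le> card (nbr E x)"
    by (rule card_inj_on_le[of "\<lambda>a. s (s a)"]) (use inj2 fnb in \<open>auto simp: B4_def intro: inj_on_subset\<close>)
  then have b4: "card B4 \<le> d" using cnb by simp
  have "card (B1 \<union> B2 \<union> B3 \<union> B4) \<le> card B1 + card B2 + card B3 + card B4"
    by (meson add_le_mono card_Un_le le_trans order_refl)
  also have "\<dots> < card W" using b1 b2 b3 b4 cW step.hyps big by simp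
  finally have lt: "card (B1 \<union> B2 \<union> B3 \<union> B4) < card W" .
  have fU: "finite (B1 \<union> B2 \<union> B3 \<union> B4)" using fW by (simp add: B1_def B2_def B3_def B4_def)
  have "\<not> W \<subseteq> B1 \<union> B2 \<union> B3 \<union> B4"
  proof
    assume "W \<subseteq> B1 \<union> B2 \<union> B3 \<union> B4"
    then have "card W \<le> card (B1 \<union> B2 \<union> B3 \<union> B4)" by (rule card_mono[OF fU])
    then show False using lt by simp
  qed
  then obtain a where a: "a \<in> W" "a \<notin> B1" "a \<notin> B2" "a \<notin> B3" "a \<notin> B4" by blast
  have g': "good n E (insert x W) (s(a:=x, x:=s a))"
  proof (rule insert_step[OF g x a(1)])
    show "x \<notin> N2 n E a" using a(1,2) unfolding B1_def by auto
    show "s a \<notin> N2 n E x" using a(1,3) unfolding B2_def by auto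
    show "\<forall>b\<in>W. s b = a \<longrightarrow> {b, x} \<notin> E" using a(1,4) unfolding B3_def by auto
    show "{x, s (s a)} \<notin> E" using a(1,5) unfolding B4_def nbr_def by auto
  qed
  have "card (insert x W) = Suc m" using fW x cW by simp
  then show ?case using g' by blast
qed

lemma full_good:
  assumes sg: "simple_graph n E" and reg: "\<forall>v<n. degree E v = d"
    and big: "5*(1+d+d*d) + 2*d + 4 < n"
  shows "\<exists>s. good n E {..<n} s"
proof -
  let ?D = "1+d+d*d"
  define X where "X = 2*?D + 2*d"
  define Q where "Q = X div 4 + 1"
  have m1: "X mod 4 < 4" by simp
  have m2: "4*(X div 4) + X mod 4 = X" by simp
  have q4: "4*Q = 4*(X div 4) + 4" unfolding Q_def by simp
  have Q1: "2*?D + 2*d < 4*Q" using m1 m2 q4 unfolding X_def by linarith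
  have Q2: "4*Q \<le> 2*?D + 2*d + 4" using m1 m2 q4 unfolding X_def by linarith
  obtain W0 s0 where g0: "good n E W0 s0" and c0: "card W0 = 4*Q"
    using phase1[OF sg reg, of Q] Q2 big by auto
  obtain W s where g: "good n E W s" and cW: "card W = n"
    using phase2[OF sg reg g0 c0 Q1, of n] Q2 big by auto
  have "W \<subseteq> {..<n}" using g unfolding good_def by auto
  then have "W = {..<n}" using cW by (simp add: card_subset_eq)
  then show ?thesis using g by blast
qed

lemma lower_main:
  assumes rr: "rrsat_graph n r E" and r: "3 \<le> r" and reg: "\<forall>v<n. degree E v = d"
  shows "n \<le> 5*(1+d+d*d) + 2*d + 4"
proof (rule ccontr)
  assume "\<not> ?thesis"
  then have big: "5*(1+d+d*d) + 2*d + 4 < n" by simp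
  have sg: "simple_graph n E" and ncl: "\<not> contains_clique n E r"
    and sat: "\<And>E'. regular_graph n E' \<Longrightarrow> E \<subset> E' \<Longrightarrow> contains_clique n E' r"
    using rr unfolding rrsat_graph_def regular_graph_def by auto
  obtain s where g: "good n E {..<n} s" using full_good[OF sg reg big] by blast
  have sn: "y < n \<Longrightarrow> s y < n" for y using g unfolding good_def by auto
  have inj: "inj_on s {..<n}" using g unfolding good_def by auto
  have P: "\<And>y. y < n \<Longrightarrow> s y \<noteq> y \<and> s (s y) \<noteq> y \<and> s (s (s y)) \<noteq> y \<and> s y \<notin> N2 n E y \<and> {y, s (s y)} \<notin> E"
    using g unfolding good_def by auto
  have injE: "y < n \<Longrightarrow> z < n \<Longrightarrow> s y = s z \<Longrightarrow> y = z" for y z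
    using inj by (auto dest: inj_onD)
  have surj: "s ` {..<n} = {..<n}"
    by (rule endo_inj_surj) (use sn inj in auto)
  define A where "A = (\<lambda>y. {y, s y}) ` {..<n}"
  have K1: "y < n \<Longrightarrow> {y, s y} \<notin> E" for y using P N2_edge sn by blast
  have AE: "A \<inter> E = {}" unfolding A_def using K1 by auto
  have Afar: "u < n \<and> v < n \<and> v \<notin> N2 n E u" if uvA: "{u,v} \<in> A" for u v
  proof -
    obtain y where y: "y < n" "{u,v} = {y, s y}" using uvA unfolding A_def by auto
    then have "(u = y \<and> v = s y) \<or> (u = s y \<and> v = y)" by (auto simp: doubleton_eq_iff)
    then show ?thesis
    proof
      assume "u = y \<and> v = s y" then show ?thesis using y P sn by auto
    next
      assume h: "u = s y \<and> v = y"
      then have "u \<notin> N2 n E v" using y P by auto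
      then show ?thesis using h y sn N2_sym by blast
    qed
  qed
  have K2': "{y, s (s y)} \<notin> A" if y: "y < n" for y
  proof
    assume "{y, s (s y)} \<in> A"
    then obtain z where z: "z < n" "{y, s (s y)} = {z, s z}" unfolding A_def by auto
    then have "(y = z \<and> s (s y) = s z) \<or> (y = s z \<and> s (s y) = z)" by (auto simp: doubleton_eq_iff)
    then show False
    proof
      assume h: "y = z \<and> s (s y) = s z"
      then have "s y = y" using injE[of "s y" y] y sn by auto
      then show False using P y by auto
    next
      assume h: "y = s z \<and> s (s y) = z"
      then have "s (s (s z)) = z" by metis
      then show False using P z by auto
    qed
  qed
  have K2: "{u,w} \<notin> E \<and> {u,w} \<notin> A" if uv: "{u,v} \<in> A" and vw: "{v,w} \<in> A" and uw: "u \<noteq> w" for u v w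
  proof -
    obtain a where a: "a < n" "{u,v} = {a, s a}" using uv unfolding A_def by auto
    obtain b where b: "b < n" "{v,w} = {b, s b}" using vw unfolding A_def by auto
    have ca: "(u = a \<and> v = s a) \<or> (u = s a \<and> v = a)" using a by (auto simp: doubleton_eq_iff)
    have cb: "(v = b \<and> w = s b) \<or> (v = s b \<and> w = b)" using b by (auto simp: doubleton_eq_iff)
    show ?thesis
    proof (cases "u = a")
      case True
      then have va: "v = s a" using ca uw by (metis P a(1))
      show ?thesis
      proof (cases "v = b")
        case True
        then have "w = s (s a)" using cb va by auto
        then show ?thesis using P[OF a(1)] K2'[OF a(1)] \<open>u = a\<close> by auto
      next
        case False
        then have "v = s b" "w = b" using cb by auto
        then have "a = b" using injE a(1) b(1) va by auto
        then show ?thesis using \<open>u = a\<close> \<open>w = b\<close> uw by simp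
      qed
    next
      case False
      then have ua: "u = s a" "v = a" using ca by auto
      show ?thesis
      proof (cases "v = b")
        case True
        then have "a = b" "w = s b" using cb ua by auto
        then show ?thesis using ua uw by simp
      next
        case False
        then have vb: "v = s b" "w = b" using cb by auto
        then have "u = s (s b)" using ua by simp
        then have "{u,w} = {b, s (s b)}" using vb by auto
        then show ?thesis using P[OF b(1)] K2'[OF b(1)] by auto
      qed
    qed
  qed
  have degA: "card {e\<in>A. x\<in>e} = 2" if x: "x < n" for x
  proof -
    obtain z where z: "z < n" "s z = x" using surj x by (metis imageE lessThan_iff)
    have "{e\<in>A. x\<in>e} = {{x, s x}, {z, x}}"
    proof (rule set_eqI, rule iffI)
      fix e assume "e \<in> {e\<in>A. x\<in>e}"
      then obtain y where y: "y < n" "e = {y, s y}" "x \<in> e" unfolding A_def by auto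
      then have "x = y \<or> x = s y" by auto
      then show "e \<in> {{x, s x}, {z, x}}"
      proof
        assume "x = s y" then have "y = z" using injE y(1) z by auto
        then show ?thesis using y \<open>x = s y\<close> by auto
      qed (use y in auto)
    next
      fix e assume "e \<in> {{x, s x}, {z, x}}"
      then show "e \<in> {e\<in>A. x\<in>e}" unfolding A_def using x z by (auto simp: insert_commute)
    qed
    moreover have "{x, s x} \<noteq> {z, x}"
    proof
      assume "{x, s x} = {z, x}"
      then have "(x = z \<and> s x = x) \<or> (s x = z)" by (auto simp: doubleton_eq_iff)
      then show False using P x z by auto
    qed
    ultimately show ?thesis by simp
  qed
  define E' where "E' = E \<union> A"
  have sgA: "simple_graph n A" unfolding simple_graph_def A_def
  proof
    fix e assume "e \<in> (\<lambda>y. {y, s y}) ` {..<n}"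
    then obtain y where y: "y < n" "e = {y, s y}" by auto
    then have "s y \<noteq> y" using P by auto
    then show "e \<subseteq> {0..<n} \<and> card e = 2" using y sn by auto
  qed
  have sg': "simple_graph n E'" using sg sgA unfolding simple_graph_def E'_def by auto
  have fE: "finite E" using sg_finite[OF sg] .
  have fA: "finite A" unfolding A_def by simp
  have degE': "degree E' x = d + 2" if x: "x < n" for x
  proof -
    have "{e\<in>E'. x\<in>e} = {e\<in>E. x\<in>e} \<union> {e\<in>A. x\<in>e}" unfolding E'_def by auto
    moreover have "card ({e\<in>E. x\<in>e} \<union> {e\<in>A. x\<in>e}) = card {e\<in>E. x\<in>e} + card {e\<in>A. x\<in>e}"
      by (rule card_Un_disjoint) (use fE fA AE in auto)
    ultimately show ?thesis using degA[OF x] reg x unfolding degree_def by simp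
  qed
  have reg': "regular_graph n E'" unfolding regular_graph_def using sg' degE' by blast
  have n0: "0 < n" using big by simp
  have "{0, s 0} \<in> A" unfolding A_def using n0 by auto
  moreover have "{0, s 0} \<notin> E" using K1 n0 by auto
  ultimately have sub: "E \<subset> E'" unfolding E'_def by auto
  have "contains_clique n E' r" using sat[OF reg' sub] .
  then obtain S where S: "S \<subseteq> {0..<n}" "card S = r" and cl: "\<forall>x\<in>S. \<forall>y\<in>S. x \<noteq> y \<longrightarrow> {x, y} \<in> E'"
    unfolding contains_clique_def by blast
  have fS: "finite S" using S r by (metis card.infinite not_numeral_le_zero)
  have "\<forall>x\<in>S. \<forall>y\<in>S. x \<noteq> y \<longrightarrow> {x, y} \<in> E"
  proof (intro ballI impI)
    fix x y assume x: "x \<in> S" and y: "y \<in> S" and xy: "x \<noteq> y"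
    show "{x,y} \<in> E"
    proof (rule ccontr)
      assume nE: "{x,y} \<notin> E"
      then have xyA: "{x,y} \<in> A" using cl x y xy unfolding E'_def by auto
      have "card (S - {x,y}) = r - 2" using S fS x y xy by (simp add: card_Diff_subset)
      then have "S - {x,y} \<noteq> {}"
      proof (intro notI)
        assume "card (S - {x,y}) = r - 2" "S - {x,y} = {}"
        then have "r - 2 = 0" by simp
        then show False using r by simp
      qed
      then obtain w where w: "w \<in> S" "w \<noteq> x" "w \<noteq> y" by blast
      have xw: "{x,w} \<in> E \<or> {x,w} \<in> A" using cl x w unfolding E'_def by auto
      have yw: "{y,w} \<in> E \<or> {y,w} \<in> A" using cl y w unfolding E'_def by auto
      have yx: "{y,x} \<in> A" using xyA by (simp add: insert_commute)
      show False
      proof (cases "{x,w} \<in> A")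
        case True
        have "{y,w} \<notin> E \<and> {y,w} \<notin> A" by (rule K2[OF yx True]) (use w in auto)
        then show False using yw by auto
      next
        case xwA: False
        show False
        proof (cases "{y,w} \<in> A")
          case True
          have wy: "{w,y} \<in> A" using True by (simp add: insert_commute)
          have "{x,w} \<notin> E \<and> {x,w} \<notin> A" using K2[OF xyA True] w by auto
          then show False using xw by auto
        next
          case False
          then have "{x,w} \<in> E" "{w,y} \<in> E" using xw yw xwA by (auto simp: insert_commute)
          then have "y \<in> N2 n E x" using Afar[OF xyA] unfolding N2_def by auto
          then show False using Afar[OF xyA] by auto
        qed
      qed
    qed
  qed
  then have "contains_clique n E r" unfolding contains_clique_def using S by blast
  then show False using ncl by simp
qed

lemma rrsat_exists:
  assumes r: "2 \<le> r"
  shows "\<exists>E. rrsat_graph n r E"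
proof -
  define F where "F = {E. regular_graph n E \<and> \<not> contains_clique n E r}"
  have sub: "F \<subseteq> Pow (Pow {0..<n})" unfolding F_def regular_graph_def simple_graph_def by auto
  have fF: "finite F" by (rule finite_subset[OF sub]) simp
  have "{} \<in> F"
  proof -
    have "regular_graph n {}" unfolding regular_graph_def simple_graph_def degree_def by auto
    moreover have "\<not> contains_clique n {} r"
    proof
      assume "contains_clique n {} r"
      then obtain S where S: "card S = r" "\<forall>x\<in>S. \<forall>y\<in>S. x \<noteq> y \<longrightarrow> {x, y} \<in> ({}::nat set set)"
        unfolding contains_clique_def by blast
      have "1 < card S" using S r by simp
      have fin: "finite S" using \<open>1 < card S\<close> card.infinite by force
      have "\<not> card S \<le> Suc 0" using \<open>1 < card S\<close> by simp
      then obtain x y where "x \<in> S" "y \<in> S" "x \<noteq> y" unfolding card_le_Suc0_iff_eq[OF fin] by blast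
      then show False using S by auto
    qed
    ultimately show ?thesis unfolding F_def by simp
  qed
  then have "F \<noteq> {}" by auto
  then obtain E where E: "E \<in> F" and mx: "\<forall>b\<in>F. E \<subseteq> b \<longrightarrow> E = b"
    using finite_has_maximal[OF fF] by blast
  have "rrsat_graph n r E"
    unfolding rrsat_graph_def
  proof (intro conjI allI impI)
    show "regular_graph n E" "\<not> contains_clique n E r" using E unfolding F_def by auto
  next
    fix E' assume h: "regular_graph n E' \<and> E \<subset> E'"
    show "contains_clique n E' r"
    proof (rule ccontr)
      assume "\<not> contains_clique n E' r"
      then have "E' \<in> F" using h unfolding F_def by auto
      then show False using mx h by auto
    qed
  qed
  then show ?thesis by blast
qed

lemma rrsat_fin: "finite {card E | E. rrsat_graph n r E}"
proof -
  have "{card E | E. rrsat_graph n r E} \<subseteq> card ` Pow (Pow {0..<n})"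
    unfolding rrsat_graph_def regular_graph_def simple_graph_def by auto
  then show ?thesis by (rule finite_subset) simp
qed

lemma rrsat_attained:
  assumes "2 \<le> r"
  shows "\<exists>E. rrsat_graph n r E \<and> rrsat n r = card E"
proof -
  have ne: "{card E | E. rrsat_graph n r E} \<noteq> {}" using rrsat_exists[OF assms, of n] by auto
  have "rrsat n r \<in> {card E | E. rrsat_graph n r E}"
    unfolding rrsat_def by (rule Min_in[OF rrsat_fin ne])
  then show ?thesis by auto
qed

lemma rrsat_le: "rrsat_graph n r E \<Longrightarrow> rrsat n r \<le> card E"
  unfolding rrsat_def by (rule Min_le[OF rrsat_fin]) auto

lemma lower_card:
  assumes r: "3 \<le> r" and n: "10 \<le> n"
  shows "real n * sqrt (real n) \<le> 10 * real (rrsat n r)"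
proof -
  obtain E where E: "rrsat_graph n r E" and c: "rrsat n r = card E"
    using rrsat_attained[of r n] r by auto
  have sg: "simple_graph n E" and "\<exists>d. \<forall>v<n. degree E v = d"
    using E unfolding rrsat_graph_def regular_graph_def by auto
  then obtain d where reg: "\<forall>v<n. degree E v = d" by blast
  have hs: "2 * card E = n * d" using handshake_reg[OF sg reg] .
  have le: "n \<le> 5*(1+d+d*d) + 2*d + 4" using lower_main[OF E r reg] .
  have d1: "1 \<le> d"
  proof (rule ccontr)
    assume "\<not> 1 \<le> d" then have "d = 0" by simp
    then show False using le n by simp
  qed
  have "n \<le> 25 * (d * d)"
  proof -
    have "d \<le> d * d" "1 \<le> d * d" using d1 by (simp_all add: mult_le_mono)
    moreover have "5*(1+d+d*d) + 2*d + 4 = 9 + 7*d + 5*(d*d)" by simp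
    ultimately show ?thesis using le by linarith
  qed
  then have "real n \<le> (5 * real d)^2" by (simp add: power2_eq_square) (metis of_nat_le_iff of_nat_mult of_nat_numeral)
  then have sq: "sqrt (real n) \<le> 5 * real d" by (simp add: real_le_lsqrt)
  have "real n * sqrt (real n) \<le> real n * (5 * real d)"
    using sq by (simp add: mult_left_mono)
  also have "\<dots> = 10 * real (card E)"
  proof -
    have "real (2 * card E) = real (n * d)" using hs by simp
    then show ?thesis by simp
  qed
  finally show ?thesis using c by simp
qed

lemma part1:
  assumes t: "1 \<le> t"
  shows "(\<lambda>n. real (rrsat n (t + 2))) \<in> \<Omega>(\<lambda>n. real n powr (3/2))"
proof -
  have ev: "eventually (\<lambda>n. (1/10) * norm (real n powr (3/2)) \<le> norm (real (rrsat n (t + 2)))) at_top"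
    unfolding eventually_at_top_linorder
  proof (intro exI allI impI)
    fix n :: nat assume n: "10 \<le> n"
    have p: "real n powr (3/2) = real n * sqrt (real n)"
    proof -
      have "real n powr (3/2) = real n powr (1 + 1/2)" by simp
      also have "\<dots> = real n powr 1 * real n powr (1/2)" by (rule powr_add)
      also have "\<dots> = real n * sqrt (real n)" using n by (simp add: powr_half_sqrt)
      finally show ?thesis .
    qed
    show "(1/10) * norm (real n powr (3/2)) \<le> norm (real (rrsat n (t + 2)))"
      using lower_card[of "t+2" n] t n p by simp
  qed
  show ?thesis unfolding bigomega_def
    by (rule CollectI, rule exI[of _ "1/10"]) (use ev in simp)
qed

lemma transport:
  fixes X :: "'a set" and adj :: "'a \<Rightarrow> 'a \<Rightarrow> bool"
  assumes fX: "finite X" and sym: "\<And>x y. adj x y = adj y x" and irr: "\<And>x. \<not> adj x x"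
    and deg: "\<And>x. x \<in> X \<Longrightarrow> card {y\<in>X. adj x y} = d"
    and noclq: "\<And>S. S \<subseteq> X \<Longrightarrow> (\<forall>x\<in>S. \<forall>y\<in>S. x \<noteq> y \<longrightarrow> adj x y) \<Longrightarrow> card S < r"
    and v0: "v0 \<in> X"
    and hub: "\<And>u. u \<in> X \<Longrightarrow> u \<noteq> v0 \<Longrightarrow> \<not> adj v0 u \<Longrightarrow>
       \<exists>K. K \<subseteq> X \<and> card K + 2 = r \<and> (\<forall>x\<in>K. adj v0 x \<and> adj u x) \<and> (\<forall>x\<in>K. \<forall>y\<in>K. x \<noteq> y \<longrightarrow> adj x y)"
  shows "\<exists>E. rrsat_graph (card X) r E \<and> 2 * card E = card X * d"
proof -
  define N where "N = card X"
  obtain h where h: "bij_betw h {0..<N} X" using ex_bij_betw_nat_finite[OF fX] unfolding N_def by blast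
  have hX: "a < N \<Longrightarrow> h a \<in> X" for a using h by (auto dest: bij_betw_apply)
  have hinj: "a < N \<Longrightarrow> b < N \<Longrightarrow> h a = h b \<Longrightarrow> a = b" for a b
    using h by (auto simp: bij_betw_def dest: inj_onD)
  have hsurj: "x \<in> X \<Longrightarrow> \<exists>a<N. h a = x" for x
    using h unfolding bij_betw_def by (metis atLeastLessThan_iff imageE)
  define E where "E = {{a,b} | a b. a < N \<and> b < N \<and> adj (h a) (h b)}"
  have memE: "{p,q} \<in> E \<longleftrightarrow> p < N \<and> q < N \<and> adj (h p) (h q)" for p q
  proof
    assume "{p,q} \<in> E"
    then obtain a b where ab: "{p,q} = {a,b}" "a < N" "b < N" "adj (h a) (h b)" unfolding E_def by blast
    then have "(p = a \<and> q = b) \<or> (p = b \<and> q = a)" by (auto simp: doubleton_eq_iff)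
    then show "p < N \<and> q < N \<and> adj (h p) (h q)" using ab sym by auto
  qed (auto simp: E_def)
  have sg: "simple_graph N E" unfolding simple_graph_def
  proof
    fix e assume "e \<in> E"
    then obtain a b where ab: "e = {a,b}" "a < N" "b < N" "adj (h a) (h b)" unfolding E_def by blast
    then have "a \<noteq> b" using irr by auto
    then show "e \<subseteq> {0..<N} \<and> card e = 2" using ab by auto
  qed
  have nb: "nbr E v = {w. w < N \<and> adj (h v) (h w)}" if v: "v < N" for v
    unfolding nbr_def using memE v by auto
  have degE: "degree E v = d" if v: "v < N" for v
  proof -
    have "h ` {w. w < N \<and> adj (h v) (h w)} = {y\<in>X. adj (h v) y}"
    proof
      show "h ` {w. w < N \<and> adj (h v) (h w)} \<subseteq> {y\<in>X. adj (h v) y}" using hX by auto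
      show "{y\<in>X. adj (h v) y} \<subseteq> h ` {w. w < N \<and> adj (h v) (h w)}"
      proof
        fix y assume "y \<in> {y\<in>X. adj (h v) y}"
        then obtain a where "a < N" "h a = y" "adj (h v) y" using hsurj by blast
        then show "y \<in> h ` {w. w < N \<and> adj (h v) (h w)}" by auto
      qed
    qed
    moreover have "inj_on h {w. w < N \<and> adj (h v) (h w)}" using hinj by (auto intro: inj_onI)
    ultimately have "card {w. w < N \<and> adj (h v) (h w)} = card {y\<in>X. adj (h v) y}"
      by (metis card_image)
    then show ?thesis using nbr_card[OF sg, of v] nb[OF v] deg[OF hX[OF v]] by simp
  qed
  have regE: "regular_graph N E" unfolding regular_graph_def using sg degE by blast
  have ncl: "\<not> contains_clique N E r"
  proof
    assume "contains_clique N E r"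
    then obtain S where S: "S \<subseteq> {0..<N}" "card S = r" and cl: "\<forall>x\<in>S. \<forall>y\<in>S. x \<noteq> y \<longrightarrow> {x, y} \<in> E"
      unfolding contains_clique_def by blast
    have injS: "inj_on h S"
    proof (rule inj_onI)
      fix x y assume xy: "x \<in> S" "y \<in> S" "h x = h y"
      have "x < N" "y < N" using S(1) xy(1,2) by auto
      then show "x = y" using hinj xy(3) by blast
    qed
    have "h ` S \<subseteq> X" using S(1) hX by auto
    moreover have "\<forall>x\<in>h ` S. \<forall>y\<in>h ` S. x \<noteq> y \<longrightarrow> adj x y" using cl memE by auto
    ultimately have "card (h ` S) < r" by (rule noclq)
    then show False using card_image[OF injS] S(2) by simp
  qed
  obtain v where v: "v < N" "h v = v0" using hsurj v0 by blast
  have sat: "contains_clique N E' r" if reg': "regular_graph N E'" and sub: "E \<subset> E'" for E'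
  proof -
    have sg': "simple_graph N E'" using reg' unfolding regular_graph_def by auto
    obtain d' where d': "\<forall>w<N. degree E' w = d'" using reg' unfolding regular_graph_def by auto
    have fE': "finite E'" using sg_finite[OF sg'] .
    obtain e where e: "e \<in> E'" "e \<notin> E" using sub by auto
    obtain p q where pq: "p \<noteq> q" "p < N" "q < N" "e = {p,q}" using sg_edge[OF sg' e(1)] by blast
    have "{e\<in>E. p\<in>e} \<subset> {e\<in>E'. p\<in>e}" using sub e pq by auto
    then have "card {e\<in>E. p\<in>e} < card {e\<in>E'. p\<in>e}" using fE' by (simp add: psubset_card_mono)
    then have "d < d'" using degE[OF pq(2)] d' pq(2) unfolding degree_def by simp
    then have dl: "degree E v < degree E' v" using degE[OF v(1)] d' v(1) by simp
    have "{e\<in>E. v\<in>e} \<noteq> {e\<in>E'. v\<in>e}"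
    proof
      assume "{e\<in>E. v\<in>e} = {e\<in>E'. v\<in>e}"
      then have "degree E v = degree E' v" unfolding degree_def by simp
      then show False using dl by simp
    qed
    then obtain e' where e': "e' \<in> E'" "e' \<notin> E" "v \<in> e'" using sub by auto
    obtain a b where ab: "a \<noteq> b" "a < N" "b < N" "e' = {a,b}" using sg_edge[OF sg' e'(1)] by blast
    obtain u where u: "u \<noteq> v" "u < N" "{v,u} \<in> E'" "{v,u} \<notin> E"
    proof (cases "a = v")
      case True
      then have "{v,b} = e'" "b \<noteq> v" using ab by auto
      then show ?thesis using that[of b] ab(3) e'(1,2) by simp
    next
      case False then have "b = v" using ab e' by auto
      then have "{v,a} = e'" "a \<noteq> v" using ab by auto
      then show ?thesis using that[of a] ab(2) e'(1,2) by simp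
    qed
    have hu: "h u \<in> X" "h u \<noteq> v0" "\<not> adj v0 (h u)"
      using hX[OF u(2)] hinj[OF u(2) v(1)] u v memE[of v u] by auto
    obtain K where K: "K \<subseteq> X" "card K + 2 = r" "\<forall>x\<in>K. adj v0 x \<and> adj (h u) x"
      and Kc: "\<forall>x\<in>K. \<forall>y\<in>K. x \<noteq> y \<longrightarrow> adj x y" using hub[OF hu] by blast
    define g where "g = inv_into {0..<N} h"
    have gK: "x \<in> X \<Longrightarrow> g x < N \<and> h (g x) = x" for x
      unfolding g_def using h by (metis atLeastLessThan_iff bij_betw_def bij_betw_inv_into_right inv_into_into)
    define S where "S = insert v (insert u (g ` K))"
    have fK: "finite K" using K(1) fX finite_subset by blast
    have injg: "inj_on g K" using gK K(1) by (metis inj_on_def subsetD)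
    have vK: "v \<notin> g ` K"
    proof
      assume "v \<in> g ` K" then obtain x where "x \<in> K" "v = g x" by auto
      then have "h v = x" using gK K(1) by auto
      then show False using K(3) \<open>x \<in> K\<close> v irr by auto
    qed
    have uK: "u \<notin> g ` K"
    proof
      assume "u \<in> g ` K" then obtain x where "x \<in> K" "u = g x" by auto
      then have "h u = x" using gK K(1) by auto
      then show False using K(3) \<open>x \<in> K\<close> irr by auto
    qed
    have cS: "card S = r" unfolding S_def using vK uK u(1) card_image[OF injg] fK K(2) by simp
    have SN: "S \<subseteq> {0..<N}" unfolding S_def using v u gK K(1) by auto
    have inE': "{x,y} \<in> E'" if x: "x \<in> S" and y: "y \<in> S" and xy: "x \<noteq> y" for x y
    proof -
      have xN: "x < N" "y < N" using SN x y by auto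
      consider (vu) "{x,y} = {v,u}" | (other) "{x,y} \<noteq> {v,u}" by blast
      then show ?thesis
      proof cases
        case vu then show ?thesis using u(3) by simp
      next
        case other
        have hx: "h x = v0 \<or> h x = h u \<or> h x \<in> K" using x gK K(1) v unfolding S_def by auto
        have hy: "h y = v0 \<or> h y = h u \<or> h y \<in> K" using y gK K(1) v unfolding S_def by auto
        have hxy: "h x \<noteq> h y" using hinj xN xy by auto
        have "x = v \<longleftrightarrow> h x = v0" "y = v \<longleftrightarrow> h y = v0" "x = u \<longleftrightarrow> h x = h u" "y = u \<longleftrightarrow> h y = h u"
          using hinj xN v u by auto
        then have "adj (h x) (h y)" using hx hy hxy K(3) Kc other sym by (auto simp: doubleton_eq_iff)
        then have "{x,y} \<in> E" using memE xN by auto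
        then show ?thesis using sub by auto
      qed
    qed
    show ?thesis unfolding contains_clique_def using SN cS inE' by blast
  qed
  have "rrsat_graph N r E" unfolding rrsat_graph_def using regE ncl sat by blast
  moreover have "2 * card E = N * d" using handshake_reg[OF sg] degE by blast
  ultimately show ?thesis unfolding N_def by blast
qed

datatype vx = V0 | Qv nat nat | Uv nat nat

definition pt :: "nat \<Rightarrow> nat" where "pt k = (if even k then k + 1 else k - 1)"

lemma pt_sym: "k' = pt k \<longleftrightarrow> k = pt k'"
  unfolding pt_def by presburger

lemma pt_neq: "pt k \<noteq> k"
  unfolding pt_def by presburger

lemma pt_neq2: "k \<noteq> pt k"
  using pt_neq by metis

lemma pt_lt: "even m \<Longrightarrow> k < m \<Longrightarrow> pt k < m"
  unfolding pt_def by presburger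

fun adj :: "vx \<Rightarrow> vx \<Rightarrow> bool" where
  "adj V0 (Qv k i) = True"
| "adj (Qv k i) V0 = True"
| "adj (Qv k i) (Qv k' i') = (k = k' \<and> i \<noteq> i')"
| "adj (Qv k i) (Uv k' j) = (k = k')"
| "adj (Uv k j) (Qv k' i) = (k = k')"
| "adj (Uv k j) (Uv k' j') = (k' = pt k)"
| "adj _ _ = False"

lemma adj_sym: "adj x y = adj y x"
  by (cases x; cases y) (auto simp: pt_sym)

lemma adj_irr: "\<not> adj x x"
  by (cases x) (auto simp: pt_neq2)

definition QS :: "nat \<Rightarrow> nat \<Rightarrow> vx set" where
  "QS m t = (\<lambda>(k,i). Qv k i) ` ({..<m} \<times> {..<t})"
definition US :: "nat \<Rightarrow> nat \<Rightarrow> vx set" where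
  "US m s = (\<lambda>(k,j). Uv k j) ` ({..<m} \<times> {..<s})"
definition VX :: "nat \<Rightarrow> nat \<Rightarrow> nat \<Rightarrow> vx set" where
  "VX m t s = insert V0 (QS m t \<union> US m s)"

lemma QS_mem: "Qv k i \<in> QS m t \<longleftrightarrow> k < m \<and> i < t" unfolding QS_def by auto
lemma US_mem: "Uv k j \<in> US m s \<longleftrightarrow> k < m \<and> j < s" unfolding US_def by auto
lemma VX_mem: "x \<in> VX m t s \<longleftrightarrow> (x = V0 \<or> (\<exists>k i. x = Qv k i \<and> k < m \<and> i < t) \<or> (\<exists>k j. x = Uv k j \<and> k < m \<and> j < s))"
  unfolding VX_def QS_def US_def by auto

lemma card_QS: "card (QS m t) = m * t"
  unfolding QS_def by (subst card_image) (auto simp: inj_on_def)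
lemma card_US: "card (US m s) = m * s"
  unfolding US_def by (subst card_image) (auto simp: inj_on_def)
lemma fin_VX: "finite (VX m t s)" unfolding VX_def QS_def US_def by simp

lemma card_VX: "card (VX m t s) = 1 + m * t + m * s"
proof -
  have "V0 \<notin> QS m t \<union> US m s" unfolding QS_def US_def by auto
  moreover have "QS m t \<inter> US m s = {}" unfolding QS_def US_def by auto
  moreover have "finite (QS m t)" "finite (US m s)" unfolding QS_def US_def by auto
  ultimately show ?thesis unfolding VX_def using card_QS card_US by (simp add: card_Un_disjoint)
qed

lemma nb_V0: "{y\<in>VX m t s. adj V0 y} = QS m t"
  unfolding VX_def QS_def US_def by auto

lemma nb_Q: "k < m \<Longrightarrow> i < t \<Longrightarrow>
  {y\<in>VX m t s. adj (Qv k i) y} = insert V0 (Qv k ` ({..<t} - {i}) \<union> Uv k ` {..<s})"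
  unfolding VX_def QS_def US_def by auto

lemma nb_U: "even m \<Longrightarrow> k < m \<Longrightarrow> j < s \<Longrightarrow>
  {y\<in>VX m t s. adj (Uv k j) y} = Qv k ` {..<t} \<union> Uv (pt k) ` {..<s}"
  unfolding VX_def QS_def US_def using pt_lt by auto

lemma deg_VX:
  assumes m: "even m" "1 \<le> m" and t: "1 \<le> t" and s: "s = t * (m - 1)" and x: "x \<in> VX m t s"
  shows "card {y\<in>VX m t s. adj x y} = t * m"
proof -
  have tm: "t + s = t * m" using s m by (cases m) auto
  consider (v) "x = V0" | (q) k i where "x = Qv k i" "k < m" "i < t" | (u) k j where "x = Uv k j" "k < m" "j < s"
    using x unfolding VX_mem by blast
  then show ?thesis
  proof cases
    case v then show ?thesis using nb_V0 card_QS by (simp add: mult.commute)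
  next
    case q
    have "card (insert V0 (Qv k ` ({..<t} - {i}) \<union> Uv k ` {..<s})) = 1 + (card (Qv k ` ({..<t} - {i})) + card (Uv k ` {..<s}))"
      by (subst card_insert_disjoint) (auto, subst card_Un_disjoint, auto)
    also have "\<dots> = 1 + ((t - 1) + s)" using q by (simp add: card_image inj_on_def)
    also have "\<dots> = t * m" using tm t by simp
    finally show ?thesis using nb_Q[OF q(2,3)] q(1) by simp
  next
    case u
    have "card (Qv k ` {..<t} \<union> Uv (pt k) ` {..<s}) = card (Qv k ` {..<t}) + card (Uv (pt k) ` {..<s})"
      by (rule card_Un_disjoint) auto
    also have "\<dots> = t + s" by (simp add: card_image inj_on_def)
    finally show ?thesis using nb_U[OF m(1) u(2,3)] u(1) tm by simp
  qed
qed

lemma clique_VX: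
  assumes t: "1 \<le> t" and S: "S \<subseteq> VX m t s" and cl: "\<forall>x\<in>S. \<forall>y\<in>S. x \<noteq> y \<longrightarrow> adj x y"
  shows "card S < t + 2"
proof (cases "\<exists>k j. Uv k j \<in> S")
  case True
  then obtain k j where kj: "Uv k j \<in> S" by blast
  show ?thesis
  proof (cases "\<exists>k' j'. Uv k' j' \<in> S \<and> Uv k' j' \<noteq> Uv k j")
    case True
    then obtain k' j' where kj': "Uv k' j' \<in> S" "Uv k' j' \<noteq> Uv k j" by blast
    have k': "k' = pt k" using cl kj kj' by fastforce
    have "S \<subseteq> {Uv k j, Uv k' j'}"
    proof
      fix z assume z: "z \<in> S"
      show "z \<in> {Uv k j, Uv k' j'}"
      proof (rule ccontr)
        assume nz: "z \<notin> {Uv k j, Uv k' j'}"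
        then have a1: "adj (Uv k j) z" "adj (Uv k' j') z" using cl z kj kj' by auto
        show False
        proof (cases z)
          case V0 then show False using a1 by simp
        next
          case (Qv k2 i2) then show False using a1 k' pt_neq[of k] by auto
        next
          case (Uv k2 j2)
          then have "k2 = pt k" "k2 = pt k'" using a1 by auto
          then have "k = k2" using k' pt_sym by metis
          then show False using \<open>k2 = pt k\<close> pt_neq by metis
        qed
      qed
    qed
    then have "card S \<le> card {Uv k j, Uv k' j'}" by (rule card_mono[rotated]) simp
    also have "\<dots> \<le> 2" by (rule card_insert_le_m1) simp_all
    finally show ?thesis using t by simp
  next
    case False
    have "S \<subseteq> insert (Uv k j) (Qv k ` {..<t})"
    proof
      fix z assume z: "z \<in> S"
      show "z \<in> insert (Uv k j) (Qv k ` {..<t})"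
      proof (cases "z = Uv k j")
        case True then show ?thesis by simp
      next
        case nz: False
        then have a1: "adj (Uv k j) z" using cl z kj by auto
        have zX: "z \<in> VX m t s" using z S by auto
        show ?thesis
        proof (cases z)
          case V0 then show ?thesis using a1 by simp
        next
          case (Qv k2 i2) then show ?thesis using a1 zX unfolding VX_mem by auto
        next
          case (Uv k2 j2) then show ?thesis using False z nz by auto
        qed
      qed
    qed
    then have "card S \<le> card (insert (Uv k j) (Qv k ` {..<t}))" by (rule card_mono[rotated]) simp
    also have "\<dots> \<le> Suc (card (Qv k ` {..<t}))" by (rule card_insert_le_m1) simp_all
    also have "\<dots> \<le> Suc t" using card_image_le[of "{..<t}" "Qv k"] by simp
    finally show ?thesis by simp
  qed
next
  case noU: False
  show ?thesis
  proof (cases "\<exists>k i. Qv k i \<in> S")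
    case True
    then obtain k i where ki: "Qv k i \<in> S" by blast
    have "S \<subseteq> insert V0 (Qv k ` {..<t})"
    proof
      fix z assume z: "z \<in> S"
      have zX: "z \<in> VX m t s" using z S by auto
      show "z \<in> insert V0 (Qv k ` {..<t})"
      proof (cases z)
        case V0 then show ?thesis by simp
      next
        case (Qv k2 i2)
        have "k2 = k"
        proof (rule ccontr)
          assume nk: "k2 \<noteq> k"
          then have "z \<noteq> Qv k i" using Qv by simp
          then have "adj z (Qv k i)" using cl z ki by blast
          then show False using Qv nk by simp
        qed
        then show ?thesis using Qv zX unfolding VX_mem by auto
      next
        case (Uv k2 j2) then show ?thesis using noU z by auto
      qed
    qed
    then have "card S \<le> card (insert V0 (Qv k ` {..<t}))" by (rule card_mono[rotated]) simp
    also have "\<dots> \<le> Suc (card (Qv k ` {..<t}))" by (rule card_insert_le_m1) simp_all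
    also have "\<dots> \<le> Suc t" using card_image_le[of "{..<t}" "Qv k"] by simp
    finally show ?thesis by simp
  next
    case False
    have "S \<subseteq> {V0}"
    proof
      fix z assume z: "z \<in> S"
      show "z \<in> {V0}" using z noU False by (cases z) auto
    qed
    then have "card S \<le> 1" using card_mono[of "{V0}" S] by simp
    then show ?thesis by simp
  qed
qed

lemma construction:
  assumes t: "1 \<le> t" and m: "even m" "1 \<le> m"
  shows "\<exists>E. rrsat_graph (1 + m * t + m * (t * (m - 1))) (t + 2) E \<and>
     2 * card E = (1 + m * t + m * (t * (m - 1))) * (t * m)"
proof -
  define s where "s = t * (m - 1)"
  have "\<exists>E. rrsat_graph (card (VX m t s)) (t + 2) E \<and> 2 * card E = card (VX m t s) * (t * m)"
  proof (rule transport[OF fin_VX adj_sym adj_irr])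
    show "\<And>x. x \<in> VX m t s \<Longrightarrow> card {y \<in> VX m t s. adj x y} = t * m"
      using deg_VX[OF m t s_def] .
    show "\<And>S. S \<subseteq> VX m t s \<Longrightarrow> \<forall>x\<in>S. \<forall>y\<in>S. x \<noteq> y \<longrightarrow> adj x y \<Longrightarrow> card S < t + 2"
      using clique_VX[OF t] by blast
    show "V0 \<in> VX m t s" unfolding VX_def by simp
    fix u assume u: "u \<in> VX m t s" "u \<noteq> V0" "\<not> adj V0 u"
    then obtain k j where kj: "u = Uv k j" "k < m" "j < s"
      unfolding VX_mem by (auto)
    have "Qv k ` {..<t} \<subseteq> VX m t s" using kj by (auto simp: VX_mem)
    moreover have "card (Qv k ` {..<t}) + 2 = t + 2" by (simp add: card_image inj_on_def)
    moreover have "\<forall>x\<in>Qv k ` {..<t}. adj V0 x \<and> adj u x" using kj by auto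
    moreover have "\<forall>x\<in>Qv k ` {..<t}. \<forall>y\<in>Qv k ` {..<t}. x \<noteq> y \<longrightarrow> adj x y" by auto
    ultimately show "\<exists>K\<subseteq>VX m t s. card K + 2 = t + 2 \<and> (\<forall>x\<in>K. adj V0 x \<and> adj u x) \<and> (\<forall>x\<in>K. \<forall>y\<in>K. x \<noteq> y \<longrightarrow> adj x y)"
      by blast
  qed
  then show ?thesis using card_VX[of m t s] unfolding s_def by simp
qed

lemma ident: "1 \<le> (m::nat) \<Longrightarrow> m*t + m*(t*(m-1)) = t*(m*m)"
proof -
  assume "1 \<le> m"
  then obtain k where k: "m = Suc k" by (cases m) auto
  then show ?thesis by (simp add: algebra_simps)
qed

lemma sub_bound:
  assumes t: "1 \<le> t"
  shows "real (rrsat (1 + t*((2*a+2)*(2*a+2))) (t + 2)) / real (1 + t*((2*a+2)*(2*a+2))) powr (3/2) \<le> real t"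
proof -
  define m where "m = 2*a+2"
  define N where "N = 1 + t*(m*m)"
  have m: "even m" "1 \<le> m" unfolding m_def by auto
  have NN: "1 + m * t + m * (t * (m - 1)) = N" unfolding N_def using ident[OF m(2), of t] by simp
  obtain E where E: "rrsat_graph N (t + 2) E" and hs: "2 * card E = N * (t * m)"
    using construction[OF t m] unfolding NN by blast
  have R: "rrsat N (t + 2) \<le> card E" by (rule rrsat_le[OF E])
  have "0 < N" unfolding N_def by simp
  then have Npos: "0 < real N" by simp
  have "1 * (m * m) \<le> t * (m * m)" using t by (rule mult_le_mono1)
  then have h: "m * m \<le> t * (m * m)" by (simp only: mult_1)
  have "m * m \<le> N" unfolding N_def using h by linarith
  then have "real m * real m \<le> real N" by (metis of_nat_le_iff of_nat_mult)
  then have msq: "real m \<le> sqrt (real N)" by (simp add: real_le_rsqrt power2_eq_square)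
  have p: "real N powr (3/2) = real N * sqrt (real N)"
  proof -
    have "real N powr (3/2) = real N powr (1 + 1/2)" by simp
    also have "\<dots> = real N powr 1 * real N powr (1/2)" by (rule powr_add)
    also have "\<dots> = real N * sqrt (real N)" using Npos by (simp add: powr_half_sqrt)
    finally show ?thesis .
  qed
  have "2 * real (rrsat N (t + 2)) \<le> 2 * real (card E)" using R by simp
  also have "\<dots> = real N * real t * real m" using hs by (metis of_nat_mult of_nat_numeral mult.assoc)
  also have "\<dots> \<le> real N * real t * sqrt (real N)" using msq Npos by (simp add: mult_left_mono)
  finally have "real (rrsat N (t + 2)) \<le> real t * (real N * sqrt (real N))"
    using Npos by (simp add: algebra_simps)
  then have "real (rrsat N (t + 2)) / (real N * sqrt (real N)) \<le> real t"
    using Npos by (simp add: divide_le_eq mult_pos_pos)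
  then show ?thesis using p unfolding N_def m_def by simp
qed

lemma part2:
  assumes t: "1 \<le> t"
  shows "\<exists>C::real. liminf (\<lambda>n. ereal (real (rrsat n (t + 2)) / real n powr (3/2))) \<le> ereal C"
proof -
  define f where "f = (\<lambda>n. ereal (real (rrsat n (t + 2)) / real n powr (3/2)))"
  define phi where "phi = (\<lambda>a::nat. 1 + t*((2*a+2)*(2*a+2)))"
  have sm: "strict_mono phi"
  unfolding strict_mono_Suc_iff
  proof
    fix a
    have lt: "(2*a+2)*(2*a+2) < (2*Suc a+2)*(2*Suc a+2)" by (simp add: mult_strict_mono)
    have "t*((2*a+2)*(2*a+2)) < t*((2*Suc a+2)*(2*Suc a+2))"
      using mult_less_mono2[OF lt, of t] t by simp
    then show "phi a < phi (Suc a)" unfolding phi_def by simp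
  qed
  have "liminf f \<le> liminf (f \<circ> phi)" by (rule liminf_subseq_mono[OF sm])
  also have "liminf (f \<circ> phi) \<le> ereal (real t)"
  proof (rule Liminf_le)
    show "sequentially \<noteq> bot" by simp
    show "\<forall>\<^sub>F x in sequentially. (f \<circ> phi) x \<le> ereal (real t)"
      using sub_bound[OF t] unfolding f_def phi_def by (simp add: always_eventually)
  qed
  finally show ?thesis unfolding f_def by blast
qed

theorem theorem1p4:
  shows "(\<forall>t::nat. t \<ge> 1 \<longrightarrow>
            (\<lambda>n. real (rrsat n (t + 2))) \<in> \<Omega>(\<lambda>n. real n powr (3/2)))
       \<and> (\<forall>t::nat. t \<ge> 1 \<longrightarrow> (\<exists>C::real.
            liminf (\<lambda>n. ereal (real (rrsat n (t + 2)) / real n powr (3/2))) \<le> ereal C))"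
  using part1 part2 by blast

end
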